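(* Let $H$ be a graph on $h\geq 10$ vertices and let $B\subseteq V(H)$ with $|B|\leq\frac{h}{100}$. Suppose every vertex in $B$ has at least $4|B|+2$ neighbours in $H$ and every vertex outside $B$ has at least $\frac{h}{2}+5|B|+5$ neighbours in $H$. Then for every $3\leq\ell\leq h$ there is a cycle of length $\ell$ in $H$ on which no four consecutive vertices contain more than one vertex of $B$. Furthermore, for any two vertices $x,y\notin B$ and every $5\leq\ell\leq h$, there is a path on $\ell$ vertices in $H$ with end-vertices $x$ and $y$ on which no four consecutive vertices contain more than one vertex of $B\cup\{x,y\}$. *)

theory Defs
  imports Complex_Main
begin

definition simple_graph :: "'a set \<Rightarrow> ('a \<Rightarrow> 'a \<Rightarrow> bool) \<Rightarrow> bool" where
  "simple_graph V E \<longleftrightarrow> finite V \<and> (\<forall>u v. E u v \<longrightarrow> u \<in> V \<and> v \<in> V)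
     \<and> (\<forall>u v. E u v \<longrightarrow> E v u) \<and> (\<forall>v. \<not> E v v)"

definition neighbours :: "'a set \<Rightarrow> ('a \<Rightarrow> 'a \<Rightarrow> bool) \<Rightarrow> 'a \<Rightarrow> 'a set" where
  "neighbours V E v = {u \<in> V. E v u}"

definition is_cycle :: "'a set \<Rightarrow> ('a \<Rightarrow> 'a \<Rightarrow> bool) \<Rightarrow> 'a list \<Rightarrow> bool" where
  "is_cycle V E c \<longleftrightarrow> length c \<ge> 3 \<and> distinct c \<and> set c \<subseteq> V
     \<and> (\<forall>i < length c. E (c ! i) (c ! ((i + 1) mod length c)))"

definition is_path :: "'a set \<Rightarrow> ('a \<Rightarrow> 'a \<Rightarrow> bool) \<Rightarrow> 'a list \<Rightarrow> bool" where
  "is_path V E p \<longleftrightarrow> p \<noteq> [] \<and> distinct p \<and> set p \<subseteq> V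
     \<and> (\<forall>i. i + 1 < length p \<longrightarrow> E (p ! i) (p ! (i + 1)))"

definition cycle_sparse4 :: "'a list \<Rightarrow> 'a set \<Rightarrow> bool" where
  "cycle_sparse4 c S \<longleftrightarrow> (\<forall>i < length c.
     card ((\<lambda>j. c ! ((i + j) mod length c)) ` {..<4} \<inter> S) \<le> 1)"

definition path_sparse4 :: "'a list \<Rightarrow> 'a set \<Rightarrow> bool" where
  "path_sparse4 p S \<longleftrightarrow> (\<forall>i. i + 3 < length p \<longrightarrow>
     card ((\<lambda>j. p ! (i + j)) ` {..<4} \<inter> S) \<le> 1)"

end

theory Submission
  imports Defs
begin

lemma nonconsec_card:
  assumes "S \<subseteq> {a..<a+n}" "\<forall>i\<in>S. Suc i \<notin> S"
  shows "2 * card S \<le> n + 1"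
  using assms
proof (induction n arbitrary: S rule: less_induct)
  case (less n)
  show ?case
  proof (cases "n \<le> 1")
    case True
    then have "S \<subseteq> {a..<a+n}" using less.prems(1) by auto
    then have "card S \<le> n" by (metis card_atLeastLessThan card_mono finite_atLeastLessThan add_diff_cancel_left')
    then show ?thesis using True by linarith
  next
    case False
    then obtain n' where n': "n = n' + 2" by (metis add.commute le_add_diff_inverse not_le one_add_one plus_1_eq_Suc Suc_leI)
    show ?thesis
    proof (cases "a + n' + 1 \<in> S")
      case True
      then have "a + n' \<notin> S" using less.prems(2) by force
      have sub: "S - {a+n'+1} \<subseteq> {a..<a+n'}"
      proof
        fix x assume x: "x \<in> S - {a+n'+1}"
        then have "a \<le> x" "x < a + n' + 2" using less.prems(1) n' by auto
        moreover have "x \<noteq> a + n'" using x \<open>a + n' \<notin> S\<close> by auto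
        ultimately show "x \<in> {a..<a+n'}" using x by auto
      qed
      have "\<forall>i\<in>S - {a+n'+1}. Suc i \<notin> S - {a+n'+1}" using less.prems(2) by auto
      then have "2 * card (S - {a+n'+1}) \<le> n' + 1" using less.IH[of n' "S - {a+n'+1}"] sub n' by auto
      moreover have "finite S" using less.prems(1) finite_subset by blast
      moreover have "card S = Suc (card (S - {a+n'+1}))" using True \<open>finite S\<close>
        by (metis card_Suc_Diff1)
      ultimately have "2 * card S \<le> n' + 3" by simp
      then show ?thesis using n' by simp
    next
      case False
      have sub: "S \<subseteq> {a..<a+(n'+1)}"
      proof
        fix x assume x: "x \<in> S"
        then have "a \<le> x" "x < a + n' + 2" using less.prems(1) n' by auto
        moreover have "x \<noteq> a + n' + 1" using x False by auto
        ultimately show "x \<in> {a..<a+(n'+1)}" by auto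
      qed
      then have "2 * card S \<le> n' + 2" using less.IH[of "n'+1" S] less.prems(2) n' by auto
      then show ?thesis using n' by simp
    qed
  qed
qed

lemma nonconsec_gap:
  assumes "S \<subseteq> {..<m}" "\<forall>i\<in>S. Suc i \<notin> S" "i < m" "even i" "i \<notin> S"
  shows "2 * card S \<le> m"
proof -
  let ?S1 = "S \<inter> {0..<i}" and ?S2 = "S \<inter> {Suc i..<m}"
  have "S \<subseteq> ?S1 \<union> ?S2"
  proof
    fix x assume x: "x \<in> S"
    then have "x < m" "x \<noteq> i" using assms(1,5) by auto
    then show "x \<in> ?S1 \<union> ?S2" using x by auto
  qed
  moreover have "finite ?S1" "finite ?S2" by auto
  ultimately have c: "card S \<le> card ?S1 + card ?S2"
    by (meson card_Un_le card_mono finite_UnI le_trans)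
  have "2 * card ?S1 \<le> i + 1" using nonconsec_card[of ?S1 0 i] assms(2) by auto
  then have c1: "2 * card ?S1 \<le> i" using assms(4) by (metis even_add even_mult_iff le_Suc_eq odd_one add.commute plus_1_eq_Suc dvd_triv_left)
  have "2 * card ?S2 \<le> (m - Suc i) + 1" using nonconsec_card[of ?S2 "Suc i" "m - Suc i"] assms(2,3) by auto
  then show ?thesis using c c1 assms(3) by linarith
qed

lemma path_append:
  assumes "is_path R E p" "is_path R E q" "set p \<inter> set q = {}" "E (last p) (hd q)"
  shows "is_path R E (p @ q)"
  unfolding is_path_def
proof (intro conjI allI impI)
  show "p @ q \<noteq> []" using assms(1) by (simp add: is_path_def)
  show "distinct (p @ q)" using assms by (simp add: is_path_def)
  show "set (p @ q) \<subseteq> R" using assms by (simp add: is_path_def)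
  fix i assume i: "i + 1 < length (p @ q)"
  have pne: "p \<noteq> []" and qne: "q \<noteq> []" using assms by (auto simp: is_path_def)
  show "E ((p @ q) ! i) ((p @ q) ! (i + 1))"
  proof (cases "i + 1 < length p")
    case True
    then show ?thesis using assms(1) by (simp add: is_path_def nth_append)
  next
    case False
    show ?thesis
    proof (cases "i + 1 = length p")
      case True
      then have "i = length p - 1" by simp
      then have "(p @ q) ! i = last p" using pne by (simp add: nth_append last_conv_nth)
      moreover have "(p @ q) ! (i+1) = hd q" using True qne by (simp add: nth_append hd_conv_nth)
      ultimately show ?thesis using assms(4) by simp
    next
      case False2: False
      then have "length p \<le> i" using False by simp
      then have "(p @ q) ! i = q ! (i - length p)" "(p @ q) ! (i+1) = q ! (i - length p + 1)"
        by (simp_all add: nth_append Suc_diff_le)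
      moreover have "i - length p + 1 < length q" using i \<open>length p \<le> i\<close> by simp
      ultimately show ?thesis using assms(2) unfolding is_path_def by metis
    qed
  qed
qed

lemma path_take:
  assumes "is_path R E p" "a < length p"
  shows "is_path R E (take (Suc a) p)"
  using assms unfolding is_path_def
  by (auto dest: in_set_takeD)

lemma path_drop:
  assumes "is_path R E p" "c < length p"
  shows "is_path R E (drop c p)"
  using assms unfolding is_path_def
  by (auto dest: in_set_dropD simp: add.commute add.left_commute)

lemma splice:
  assumes P: "is_path R E P" and ac: "a < c" "c < length P" and Q: "is_path R E Q"
    and disj: "set Q \<inter> set P = {}" and e1: "E (P!a) (hd Q)" and e2: "E (last Q) (P!c)"
  shows "is_path R E (take (Suc a) P @ Q @ drop c P)
    \<and> length (take (Suc a) P @ Q @ drop c P) = Suc a + length Q + (length P - c)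
    \<and> hd (take (Suc a) P @ Q @ drop c P) = hd P
    \<and> last (take (Suc a) P @ Q @ drop c P) = last P"
proof -
  have dP: "distinct P" using P by (simp add: is_path_def)
  have t: "is_path R E (take (Suc a) P)" using path_take[OF P, of a] ac by linarith
  have d: "is_path R E (drop c P)" using path_drop[OF P ac(2)] .
  have qne: "Q \<noteq> []" using Q by (simp add: is_path_def)
  have "set Q \<inter> set (drop c P) = {}" using disj by (meson disjoint_iff in_set_dropD)
  moreover have "E (last Q) (hd (drop c P))" using e2 ac by (simp add: hd_drop_conv_nth)
  ultimately have qd: "is_path R E (Q @ drop c P)" using path_append[OF Q d] by simp
  have "set (take (Suc a) P) \<inter> set (drop c P) = {}"
    using set_take_disj_set_drop_if_distinct[OF dP, of "Suc a" c] ac by simp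
  moreover have "set (take (Suc a) P) \<inter> set Q = {}" using disj by (meson disjoint_iff in_set_takeD)
  ultimately have "set (take (Suc a) P) \<inter> set (Q @ drop c P) = {}" by auto
  moreover have "E (last (take (Suc a) P)) (hd (Q @ drop c P))"
    using e1 ac qne by (simp add: take_Suc_conv_app_nth hd_append)
  ultimately have "is_path R E (take (Suc a) P @ Q @ drop c P)"
    using path_append[OF t qd] by simp
  moreover have "length (take (Suc a) P @ Q @ drop c P) = Suc a + length Q + (length P - c)"
    using ac by simp
  moreover have "hd (take (Suc a) P @ Q @ drop c P) = hd P" using ac
    by (cases P) auto
  moreover have "last (take (Suc a) P @ Q @ drop c P) = last P" using ac
    by (simp add: last_append)
  ultimately show ?thesis by blast
qed

lemma path_single: "is_path R E [a] \<longleftrightarrow> a \<in> R"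
  by (simp add: is_path_def)

lemma path_Cons2:
  "is_path R E (a # b # p) \<longleftrightarrow> a \<in> R \<and> a \<notin> set (b # p) \<and> E a b \<and> is_path R E (b # p)"
proof
  assume h: "is_path R E (a # b # p)"
  have "\<forall>i. i + 1 < length (b # p) \<longrightarrow> E ((b # p) ! i) ((b # p) ! (i + 1))"
  proof (intro allI impI)
    fix i assume "i + 1 < length (b # p)"
    then have "Suc i + 1 < length (a # b # p)" by simp
    then have "E ((a # b # p) ! Suc i) ((a # b # p) ! (Suc i + 1))" using h unfolding is_path_def by blast
    then show "E ((b # p) ! i) ((b # p) ! (i + 1))" by simp
  qed
  moreover have "E a b" using h unfolding is_path_def by (metis One_nat_def add.left_neutral length_Cons less_Suc_eq_0_disj nth_Cons_0 nth_Cons_Suc zero_less_Suc add_Suc)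
  ultimately show "a \<in> R \<and> a \<notin> set (b # p) \<and> E a b \<and> is_path R E (b # p)"
    using h unfolding is_path_def by auto
next
  assume h: "a \<in> R \<and> a \<notin> set (b # p) \<and> E a b \<and> is_path R E (b # p)"
  show "is_path R E (a # b # p)"
    unfolding is_path_def
  proof (intro conjI allI impI)
    show "a # b # p \<noteq> []" by simp
    show "distinct (a # b # p)" using h by (simp add: is_path_def)
    show "set (a # b # p) \<subseteq> R" using h by (simp add: is_path_def)
    fix i assume i: "i + 1 < length (a # b # p)"
    show "E ((a # b # p) ! i) ((a # b # p) ! (i + 1))"
    proof (cases i)
      case 0 then show ?thesis using h by simp
    next
      case (Suc j)
      then have "j + 1 < length (b # p)" using i by simp
      then have "E ((b # p) ! j) ((b # p) ! (j + 1))" using h unfolding is_path_def by blast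
      then show ?thesis using Suc by simp
    qed
  qed
qed

lemma path_mono: "is_path S E q \<Longrightarrow> S \<subseteq> T \<Longrightarrow> is_path T E q"
  by (auto simp: is_path_def)

lemma common_nb:
  assumes "finite S"
  shows "card {u\<in>S. E v1 u} + card {u\<in>S. E v2 u} \<le> card ({u\<in>S. E v1 u} \<inter> {u\<in>S. E v2 u}) + card S"
proof -
  have "card {u\<in>S. E v1 u} + card {u\<in>S. E v2 u} = card ({u\<in>S. E v1 u} \<union> {u\<in>S. E v2 u}) + card ({u\<in>S. E v1 u} \<inter> {u\<in>S. E v2 u})"
    using card_Un_Int[of "{u\<in>S. E v1 u}" "{u\<in>S. E v2 u}"] assms by simp
  moreover have "card ({u\<in>S. E v1 u} \<union> {u\<in>S. E v2 u}) \<le> card S"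
    using assms by (intro card_mono) auto
  ultimately show ?thesis by linarith
qed

lemma pick:
  assumes "finite F" "card F < card S"
  shows "\<exists>x\<in>S. x \<notin> F"
proof (rule ccontr)
  assume "\<not> ?thesis"
  then have "S \<subseteq> F" by auto
  then have "card S \<le> card F" using assms(1) by (simp add: card_mono)
  then show False using assms(2) by simp
qed

lemma pick2:
  assumes "2 < card S"
  shows "\<exists>x\<in>S. x \<noteq> a \<and> x \<noteq> b"
proof -
  have "card {a,b} \<le> 2" by (simp add: card_insert_if)
  then show ?thesis using pick[of "{a,b}" S] assms by force
qed

lemma pick1:
  assumes "1 < card S"
  shows "\<exists>x\<in>S. x \<noteq> a"
  using pick[of "{a}" S] assms by force

lemma core_step:
  assumes sym: "\<forall>u v. E u v \<longrightarrow> E v u" and irr: "\<forall>v. \<not> E v v"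
    and fin: "finite R"
    and deg: "\<forall>v\<in>R. card R + 6 \<le> 2 * card {u\<in>R. E v u}"
    and IHW: "\<And>W z z' k. W \<subset> R \<Longrightarrow> (\<forall>v\<in>W. card W + 6 \<le> 2 * card {u\<in>W. E v u})
       \<Longrightarrow> z \<in> W \<Longrightarrow> z' \<in> W \<Longrightarrow> z \<noteq> z' \<Longrightarrow> 3 \<le> k \<Longrightarrow> k \<le> card W
       \<Longrightarrow> \<exists>q. is_path W E q \<and> length q = k \<and> hd q = z \<and> last q = z'"
    and P: "is_path R E P" and m: "length P = m" "4 \<le> m" "m < card R"
  shows "\<exists>P'. is_path R E P' \<and> length P' = Suc m \<and> hd P' = hd P \<and> last P' = last P"
proof -
  define W where "W = R - set P"
  define nb :: "'a set \<Rightarrow> 'a \<Rightarrow> nat" where "nb S v = card {u\<in>S. E v u}" for S v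
  define I where "I z = {i. i < m \<and> E (P!i) z}" for z
  have dP: "distinct P" and sP: "set P \<subseteq> R" using P by (auto simp: is_path_def)
  have cP: "card (set P) = m" using dP m(1) distinct_card by blast
  have finW: "finite W" using fin W_def by simp
  have RW: "R = set P \<union> W" and disjPW: "set P \<inter> W = {}" using sP W_def by auto
  have cR: "card R = m + card W" using RW disjPW cP finW card_Un_disjoint[of "set P" W] by simp
  have WR: "W \<subseteq> R" using W_def by auto
  have nbsplit: "nb R v = nb (set P) v + nb W v" for v
  proof -
    have "{u\<in>R. E v u} = {u\<in>set P. E v u} \<union> {u\<in>W. E v u}" using RW by auto
    moreover have "{u\<in>set P. E v u} \<inter> {u\<in>W. E v u} = {}" using disjPW by auto
    ultimately show ?thesis unfolding nb_def using finW by (simp add: card_Un_disjoint)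
  qed
  have nbI: "nb (set P) z = card (I z)" for z
  proof -
    have "{u\<in>set P. E z u} = (\<lambda>i. P!i) ` I z"
    proof
      show "{u\<in>set P. E z u} \<subseteq> (\<lambda>i. P!i) ` I z"
      proof
        fix u assume "u \<in> {u\<in>set P. E z u}"
        then obtain i where "i < m" "P!i = u" "E z u" using m(1) by (auto simp: in_set_conv_nth)
        then show "u \<in> (\<lambda>i. P!i) ` I z" unfolding I_def using sym by blast
      qed
      show "(\<lambda>i. P!i) ` I z \<subseteq> {u\<in>set P. E z u}" unfolding I_def using sym m(1) by auto
    qed
    moreover have "inj_on (\<lambda>i. P!i) (I z)" using dP m(1) unfolding I_def
      by (simp add: inj_on_def nth_eq_iff_index_eq)
    ultimately show ?thesis unfolding nb_def by (simp add: card_image)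
  qed
  have Isub: "I z \<subseteq> {..<m}" for z unfolding I_def by auto
  have finI: "finite (I z)" for z using Isub finite_subset by blast
  have nbP_le: "nb (set P) v \<le> m - 1" if "v \<in> set P" for v
  proof -
    have "{u\<in>set P. E v u} \<subseteq> set P - {v}" using irr by auto
    then have "nb (set P) v \<le> card (set P - {v})" unfolding nb_def by (simp add: card_mono)
    then show ?thesis using cP that by simp
  qed
  have nbW_le: "nb W v \<le> card W - 1" if "v \<in> W" for v
  proof -
    have "{u\<in>W. E v u} \<subseteq> W - {v}" using irr by auto
    then have "nb W v \<le> card (W - {v})" unfolding nb_def using finW by (simp add: card_mono)
    then show ?thesis using finW that by simp
  qed
  have nbR_le: "nb R v \<le> card R - 1" if "v \<in> R" for v
  proof -
    have "{u\<in>R. E v u} \<subseteq> R - {v}" using irr by auto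
    then have "nb R v \<le> card (R - {v})" unfolding nb_def using fin by (simp add: card_mono)
    then show ?thesis using fin that by simp
  qed
  have degR: "card R + 6 \<le> 2 * nb R v" if "v \<in> R" for v using deg that unfolding nb_def by blast
  have cR8: "8 \<le> card R"
  proof -
    have "P!0 \<in> set P" using m by (intro nth_mem) simp
    then have "P!0 \<in> R" using sP by auto
    then show ?thesis using degR[of "P!0"] nbR_le[of "P!0"] by linarith
  qed
  have Wne: "W \<noteq> {}" using cR m(3) finW by auto
  have pathW: "is_path R E q" if "is_path W E q" for q using that WR path_mono by blast
  have disjW: "set q \<inter> set P = {}" if "is_path W E q" for q
    using that disjPW by (auto simp: is_path_def)
  show ?thesis
  proof (cases "\<exists>z\<in>W. \<exists>i. Suc i < m \<and> E (P!i) z \<and> E z (P!Suc i)")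
    case True
    then obtain z i where z: "z \<in> W" "Suc i < m" "E (P!i) z" "E z (P!Suc i)" by blast
    have q: "is_path W E [z]" using z by (simp add: path_single)
    have "is_path R E (take (Suc i) P @ [z] @ drop (Suc i) P) \<and>
      length (take (Suc i) P @ [z] @ drop (Suc i) P) = Suc i + length [z] + (length P - Suc i) \<and>
      hd (take (Suc i) P @ [z] @ drop (Suc i) P) = hd P \<and> last (take (Suc i) P @ [z] @ drop (Suc i) P) = last P"
      using splice[OF P, of i "Suc i" "[z]"] z m pathW[OF q] disjW[OF q] by simp
    then show ?thesis using z m by (intro exI[of _ "take (Suc i) P @ [z] @ drop (Suc i) P"]) simp
  next
    case False
    have nc: "\<forall>i\<in>I z. Suc i \<notin> I z" if "z \<in> W" for z
      using False that sym unfolding I_def by blast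
    have Icard: "2 * card (I z) \<le> m + 1" if "z \<in> W" for z
      using nonconsec_card[of "I z" 0 m] Isub[of z] nc[OF that] by (simp add: lessThan_atLeast0)
    have Wdeg1: "card W + 5 \<le> 2 * nb W z" if "z \<in> W" for z
      using degR[of z] that WR nbsplit[of z] nbI[of z] Icard[OF that] cR by auto
    obtain z0 where "z0 \<in> W" using Wne by blast
    have cW: "7 \<le> card W" using Wdeg1[OF \<open>z0 \<in> W\<close>] nbW_le[OF \<open>z0 \<in> W\<close>] by linarith
    have common: "5 \<le> card ({u\<in>W. E z1 u} \<inter> {u\<in>W. E z2 u})" if "z1 \<in> W" "z2 \<in> W" for z1 z2
      using common_nb[OF finW, of E z1 z2] Wdeg1[OF that(1)] Wdeg1[OF that(2)] unfolding nb_def by linarith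
    show ?thesis
    proof (cases "\<exists>z\<in>W. 2 * card (I z) = m + 1")
      case True
      then obtain z where z: "z \<in> W" "2 * card (I z) = m + 1" by blast
      have ev: "i \<in> I z" if "i < m" "even i" for i
      proof (rule ccontr)
        assume "i \<notin> I z"
        then have "2 * card (I z) \<le> m" using nonconsec_gap[OF Isub nc[OF z(1)] that] by simp
        then show False using z(2) by simp
      qed
      have modd: "odd m" using z(2) by presburger
      then have m5: "5 \<le> m" using m(2) by presburger
      show ?thesis
      proof (cases "\<exists>oo w. oo < m \<and> odd oo \<and> w \<in> W \<and> E (P!oo) w")
        case True
        then obtain oo w where ow: "oo < m" "odd oo" "w \<in> W" "E (P!oo) w" by blast
        have o1: "1 \<le> oo" using ow(2) by (cases oo) auto
        have "E (P!(oo-1)) z" using ev[of "oo-1"] ow o1 unfolding I_def by auto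
        note eo = this
        have wz: "w \<noteq> z"
        proof
          assume "w = z"
          then have "E z (P!(Suc (oo-1)))" using ow o1 sym by simp
          moreover have "Suc (oo-1) < m" using ow o1 by simp
          ultimately show False using False z(1) eo by blast
        qed
        have "0 < card ({u\<in>W. E w u} \<inter> {u\<in>W. E z u})" using common[OF ow(3) z(1)] by linarith
        then obtain c where c: "c \<in> W" "E w c" "E z c" by (metis (no_types, lifting) card_gt_0_iff disjoint_iff mem_Collect_eq)
        have cw: "c \<noteq> w" "c \<noteq> z" using c irr by auto
        show ?thesis
        proof (cases "oo + 3 < m")
          case True
          have e: "E (P!(oo+3)) z" using ev[of "oo+3"] True ow(2) unfolding I_def by auto
          have q: "is_path W E [w, c, z]" using c cw wz z(1) ow(3) sym by (simp add: path_Cons2 path_single)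
          have "is_path R E (take (Suc oo) P @ [w,c,z] @ drop (oo+3) P) \<and>
            length (take (Suc oo) P @ [w,c,z] @ drop (oo+3) P) = Suc oo + length [w,c,z] + (length P - (oo+3)) \<and>
            hd (take (Suc oo) P @ [w,c,z] @ drop (oo+3) P) = hd P \<and> last (take (Suc oo) P @ [w,c,z] @ drop (oo+3) P) = last P"
            using splice[OF P, of oo "oo+3" "[w,c,z]"] True m pathW[OF q] disjW[OF q] ow(4) e sym by simp
          then show ?thesis using True m by (intro exI[of _ "take (Suc oo) P @ [w,c,z] @ drop (oo+3) P"]) simp
        next
          case False
          have o3: "3 \<le> oo" using False ow(2) m5 by presburger
          have e: "E (P!(oo-3)) z" using ev[of "oo-3"] o3 ow unfolding I_def by auto
          have q: "is_path W E [z, c, w]" using c cw wz z(1) ow(3) sym by (simp add: path_Cons2 path_single)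
          have "is_path R E (take (Suc (oo-3)) P @ [z,c,w] @ drop oo P) \<and>
            length (take (Suc (oo-3)) P @ [z,c,w] @ drop oo P) = Suc (oo-3) + length [z,c,w] + (length P - oo) \<and>
            hd (take (Suc (oo-3)) P @ [z,c,w] @ drop oo P) = hd P \<and> last (take (Suc (oo-3)) P @ [z,c,w] @ drop oo P) = last P"
            using splice[OF P, of "oo-3" oo "[z,c,w]"] o3 ow m pathW[OF q] disjW[OF q] e sym by simp
          then show ?thesis using o3 ow m by (intro exI[of _ "take (Suc (oo-3)) P @ [z,c,w] @ drop oo P"]) simp
        qed
      next
        case False
        then have noW: "\<not> E (P!oo) w" if "oo < m" "odd oo" "w \<in> W" for oo w using that by blast
        have "{u\<in>R. E (P!1) u} \<subseteq> set P - {P!1}"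
        proof
          fix u assume u: "u \<in> {u\<in>R. E (P!1) u}"
          then have "u \<notin> W" using noW[of 1] m by auto
          then show "u \<in> set P - {P!1}" using u RW irr by auto
        qed
        then have "nb R (P!1) \<le> card (set P - {P!1})" unfolding nb_def by (simp add: card_mono)
        moreover have p1: "P!1 \<in> set P" using m by simp
        ultimately have "nb R (P!1) \<le> m - 1" using cP by simp
        moreover have "P!1 \<in> R" using p1 sP by auto
        ultimately have m2: "card R + 8 \<le> 2 * m" using degR[of "P!1"] m by linarith
        obtain w where w: "w \<in> W" "w \<noteq> z" using pick1[of W z] cW by auto
        have "0 < card (I w)" using degR[of w] WR w nbsplit[of w] nbI[of w] nbW_le[OF w(1)] cR m2 by auto
        then obtain e where e: "e < m" "E (P!e) w" unfolding I_def by (metis (no_types, lifting) card_gt_0_iff ex_in_conv mem_Collect_eq)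
        have eev: "even e" using noW e w by blast
        have "1 < card {u\<in>W. E w u}" using Wdeg1[OF w(1)] cW unfolding nb_def by linarith
        then obtain c1 where c1: "c1 \<in> W" "E w c1" "c1 \<noteq> z" using pick1[of "{u\<in>W. E w u}" z] by auto
        have "1 < card ({u\<in>W. E c1 u} \<inter> {u\<in>W. E z u})" using common[OF c1(1) z(1)] by linarith
        then obtain c2 where c2: "c2 \<in> W" "E c1 c2" "E z c2" "c2 \<noteq> w" using pick1[of "{u\<in>W. E c1 u} \<inter> {u\<in>W. E z u}" w] by auto
        have ne: "w \<noteq> c1" "c1 \<noteq> c2" "c2 \<noteq> z" using irr c1 c2 by auto
        show ?thesis
        proof (cases "e + 4 < m")
          case True
          have ez: "E (P!(e+4)) z" using ev[of "e+4"] True eev unfolding I_def by auto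
          have q: "is_path W E [w, c1, c2, z]" using c1 c2 ne w z(1) sym by (simp add: path_Cons2 path_single)
          have "is_path R E (take (Suc e) P @ [w,c1,c2,z] @ drop (e+4) P) \<and>
            length (take (Suc e) P @ [w,c1,c2,z] @ drop (e+4) P) = Suc e + length [w,c1,c2,z] + (length P - (e+4)) \<and>
            hd (take (Suc e) P @ [w,c1,c2,z] @ drop (e+4) P) = hd P \<and> last (take (Suc e) P @ [w,c1,c2,z] @ drop (e+4) P) = last P"
            using splice[OF P, of e "e+4" "[w,c1,c2,z]"] True m pathW[OF q] disjW[OF q] e ez sym by simp
          then show ?thesis using True m by (intro exI[of _ "take (Suc e) P @ [w,c1,c2,z] @ drop (e+4) P"]) simp
        next
          case False
          have e4: "4 \<le> e" using False m2 cR8 by linarith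
          have ez: "E (P!(e-4)) z" using ev[of "e-4"] e4 e eev unfolding I_def by auto
          have q: "is_path W E [z, c2, c1, w]" using c1 c2 ne w z(1) sym by (simp add: path_Cons2 path_single)
          have "is_path R E (take (Suc (e-4)) P @ [z,c2,c1,w] @ drop e P) \<and>
            length (take (Suc (e-4)) P @ [z,c2,c1,w] @ drop e P) = Suc (e-4) + length [z,c2,c1,w] + (length P - e) \<and>
            hd (take (Suc (e-4)) P @ [z,c2,c1,w] @ drop e P) = hd P \<and> last (take (Suc (e-4)) P @ [z,c2,c1,w] @ drop e P) = last P"
            using splice[OF P, of "e-4" e "[z,c2,c1,w]"] e4 e m pathW[OF q] disjW[OF q] ez sym by simp
          then show ?thesis using e4 e m by (intro exI[of _ "take (Suc (e-4)) P @ [z,c2,c1,w] @ drop e P"]) simp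
        qed
      qed
    next
      case False
      then have Inot: "2 * card (I z) \<le> m" if "z \<in> W" for z using Icard[OF that] that by force
      have Wdeg: "\<forall>v\<in>W. card W + 6 \<le> 2 * card {u\<in>W. E v u}"
      proof
        fix z assume z: "z \<in> W"
        show "card W + 6 \<le> 2 * card {u\<in>W. E z u}"
          using degR[of z] z WR nbsplit[of z] nbI[of z] Inot[OF z] cR unfolding nb_def by auto
      qed
      have Wsub: "W \<subset> R" using WR W_def m sP by (metis Diff_iff hd_in_set is_path_def P psubsetI subset_iff)
      have IH: "\<exists>q. is_path W E q \<and> length q = k \<and> hd q = z \<and> last q = z'"
        if "z \<in> W" "z' \<in> W" "z \<noteq> z'" "3 \<le> k" "k \<le> card W" for z z' k
        using IHW[OF Wsub Wdeg that] .
      show ?thesis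
      proof (cases "2 * m + 2 \<le> card R + 6")
        case True
        have pv: "2 \<le> card {u\<in>W. E v u}" if "v \<in> set P" for v
          using degR[of v] that sP nbsplit[of v] nbP_le[OF that] True unfolding nb_def by auto
        have "0 < card {u\<in>W. E (P!0) u}" using pv[of "P!0"] m by simp
        then obtain z where z: "z \<in> W" "E (P!0) z" by (metis (no_types, lifting) card_gt_0_iff ex_in_conv mem_Collect_eq)
        have "1 < card {u\<in>W. E (P!3) u}" using pv[of "P!3"] m by simp
        then obtain z' where z': "z' \<in> W" "E (P!3) z'" "z' \<noteq> z" using pick1[of "{u\<in>W. E (P!3) u}" z] by auto
        obtain q where q: "is_path W E q" "length q = 3" "hd q = z" "last q = z'"
          using IH[OF z(1) z'(1) z'(3)[symmetric], of 3] cW by auto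
        have "is_path R E (take (Suc 0) P @ q @ drop 3 P) \<and>
            length (take (Suc 0) P @ q @ drop 3 P) = Suc 0 + length q + (length P - 3) \<and>
            hd (take (Suc 0) P @ q @ drop 3 P) = hd P \<and> last (take (Suc 0) P @ q @ drop 3 P) = last P"
          using splice[OF P, of 0 3 q] m pathW[OF q(1)] disjW[OF q(1)] q z z' sym by simp
        then show ?thesis using q m by (intro exI[of _ "take (Suc 0) P @ q @ drop 3 P"]) simp
      next
        case False
        have Iw: "2 * m + 8 \<le> 2 * card (I w) + card R" if "w \<in> W" for w
        proof -
          have "w \<in> R" using that WR by auto
          then show ?thesis using degR[of w] nbsplit[of w] nbI[of w] nbW_le[OF that] cR cW by linarith
        qed
        obtain z where z: "z \<in> W" using Wne by blast
        obtain z' where z': "z' \<in> W" "z' \<noteq> z" using pick1[of W z] cW by auto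
        have "0 < card (I z')" using Iw[OF z'(1)] False by linarith
        then obtain c where c: "c \<in> I z'" by (metis card_gt_0_iff ex_in_conv)
        have cm: "c < m" "E (P!c) z'" using c unfolding I_def by auto
        define Lo where "Lo = {i\<in>I z. i + 3 \<le> c}"
        define Up where "Up = {i\<in>I z. c + 3 \<le> i}"
        have Iz7: "7 \<le> card (I z)" using Iw[OF z] False by linarith
        have LU: "Lo \<noteq> {} \<or> Up \<noteq> {}"
        proof (rule ccontr)
          assume "\<not> ?thesis"
          then have h: "\<forall>x\<in>I z. \<not> x + 3 \<le> c \<and> \<not> c + 3 \<le> x" unfolding Lo_def Up_def by auto
          have "I z \<subseteq> {c-2..<c-2+5}"
          proof
            fix x assume "x \<in> I z"
            then have "\<not> x + 3 \<le> c" "\<not> c + 3 \<le> x" using h by auto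
            then show "x \<in> {c-2..<c-2+5}" by auto
          qed
          then have "2 * card (I z) \<le> 5 + 1" using nonconsec_card[of "I z" "c-2" 5] nc[OF z] by auto
          then show False using Iz7 by simp
        qed
        show ?thesis
        proof (cases "Lo \<noteq> {}")
          case True
          have finLo: "finite Lo" unfolding Lo_def using finI by simp
          define i where "i = Max Lo"
          have iL: "i \<in> Lo" using True finLo i_def by simp
          have iI: "i \<in> I z" "i + 3 \<le> c" using iL unfolding Lo_def by auto
          have imax: "j \<le> i" if "j \<in> Lo" for j using finLo that i_def by simp
          have bound: "c - i \<le> card W"
          proof (rule ccontr)
            assume nb: "\<not> c - i \<le> card W"
            have "I z \<subseteq> (I z \<inter> {0..<0 + Suc i}) \<union> (I z \<inter> {c-2..<c-2+(m-(c-2))})"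
            proof
              fix j assume j: "j \<in> I z"
              show "j \<in> (I z \<inter> {0..<0 + Suc i}) \<union> (I z \<inter> {c-2..<c-2+(m-(c-2))})"
              proof (cases "j \<le> i")
                case True then show ?thesis using j by auto
              next
                case False
                then have "j \<notin> Lo" using imax by force
                then have "c < j + 3" using j unfolding Lo_def by auto
                moreover have "j < m" using j Isub by auto
                ultimately show ?thesis using j by auto
              qed
            qed
            then have "card (I z) \<le> card (I z \<inter> {0..<0 + Suc i}) + card (I z \<inter> {c-2..<c-2+(m-(c-2))})"
              by (meson card_Un_le card_mono finite_Int finite_UnI finite_atLeastLessThan le_trans)
            moreover have "2 * card (I z \<inter> {0..<0 + Suc i}) \<le> Suc i + 1"
              using nonconsec_card[of "I z \<inter> {0..<0 + Suc i}" 0 "Suc i"] nc[OF z] by auto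
            moreover have "2 * card (I z \<inter> {c-2..<c-2+(m-(c-2))}) \<le> (m - (c-2)) + 1"
              using nonconsec_card[of "I z \<inter> {c-2..<c-2+(m-(c-2))}" "c-2" "m-(c-2)"] nc[OF z] by auto
            ultimately have "2 * card (I z) \<le> i + m - c + 5" using iI cm by linarith
            then show False using Iw[OF z] nb cR iI cm by linarith
          qed
          obtain q where q: "is_path W E q" "length q = c - i" "hd q = z" "last q = z'"
            using IH[OF z z'(1) z'(2)[symmetric], of "c - i"] bound iI by (metis add.commute le_diff_conv2 le_add2 le_trans)
          have ez: "E (P!i) z" using iI unfolding I_def by auto
          have "is_path R E (take (Suc i) P @ q @ drop c P) \<and>
            length (take (Suc i) P @ q @ drop c P) = Suc i + length q + (length P - c) \<and>
            hd (take (Suc i) P @ q @ drop c P) = hd P \<and> last (take (Suc i) P @ q @ drop c P) = last P"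
            using splice[OF P, of i c q] iI cm m pathW[OF q(1)] disjW[OF q(1)] q ez sym by simp
          then show ?thesis using q m iI cm by (intro exI[of _ "take (Suc i) P @ q @ drop c P"]) simp
        next
          case False
          then have UpNE: "Up \<noteq> {}" using LU by simp
          have finUp: "finite Up" unfolding Up_def using finI by simp
          define i where "i = Min Up"
          have iU: "i \<in> Up" using UpNE finUp i_def by simp
          have iI: "i \<in> I z" "c + 3 \<le> i" using iU unfolding Up_def by auto
          have im: "i < m" using iI Isub by auto
          have imin: "i \<le> j" if "j \<in> Up" for j using finUp that i_def by simp
          have bound: "i - c \<le> card W"
          proof (rule ccontr)
            assume nb: "\<not> i - c \<le> card W"
            have "I z \<subseteq> (I z \<inter> {0..<0 + (c+3)}) \<union> (I z \<inter> {i..<i+(m-i)})"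
            proof
              fix j assume j: "j \<in> I z"
              show "j \<in> (I z \<inter> {0..<0 + (c+3)}) \<union> (I z \<inter> {i..<i+(m-i)})"
              proof (cases "i \<le> j")
                case True
                moreover have "j < m" using j Isub by auto
                ultimately show ?thesis using j by auto
              next
                case False
                then have "j \<notin> Up" using imin by force
                then have "j < c + 3" using j unfolding Up_def by auto
                then show ?thesis using j by auto
              qed
            qed
            then have "card (I z) \<le> card (I z \<inter> {0..<0 + (c+3)}) + card (I z \<inter> {i..<i+(m-i)})"
              by (meson card_Un_le card_mono finite_Int finite_UnI finite_atLeastLessThan le_trans)
            moreover have "2 * card (I z \<inter> {0..<0 + (c+3)}) \<le> (c+3) + 1"
              using nonconsec_card[of "I z \<inter> {0..<0 + (c+3)}" 0 "c+3"] nc[OF z] by auto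
            moreover have "2 * card (I z \<inter> {i..<i+(m-i)}) \<le> (m - i) + 1"
              using nonconsec_card[of "I z \<inter> {i..<i+(m-i)}" i "m-i"] nc[OF z] by auto
            ultimately have "2 * card (I z) \<le> m + c + 5 - i" using im by linarith
            then show False using Iw[OF z] nb cR iI im by linarith
          qed
          obtain q where q: "is_path W E q" "length q = i - c" "hd q = z'" "last q = z"
            using IH[OF z'(1) z z'(2), of "i - c"] bound iI by (metis add.commute le_diff_conv2 le_add2 le_trans)
          have ez: "E (P!i) z" using iI unfolding I_def by auto
          have "is_path R E (take (Suc c) P @ q @ drop i P) \<and>
            length (take (Suc c) P @ q @ drop i P) = Suc c + length q + (length P - i) \<and>
            hd (take (Suc c) P @ q @ drop i P) = hd P \<and> last (take (Suc c) P @ q @ drop i P) = last P"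
            using splice[OF P, of c i q] iI im m pathW[OF q(1)] disjW[OF q(1)] q ez cm sym by simp
          then show ?thesis using q m iI im by (intro exI[of _ "take (Suc c) P @ q @ drop i P"]) simp
        qed
      qed
    qed
  qed
qed

lemma core_len:
  assumes sym: "\<forall>u v. E u v \<longrightarrow> E v u" and irr: "\<forall>v. \<not> E v v"
    and fin: "finite R"
    and deg: "\<forall>v\<in>R. card R + 6 \<le> 2 * card {u\<in>R. E v u}"
    and IHW: "\<And>W z z' k. W \<subset> R \<Longrightarrow> (\<forall>v\<in>W. card W + 6 \<le> 2 * card {u\<in>W. E v u})
       \<Longrightarrow> z \<in> W \<Longrightarrow> z' \<in> W \<Longrightarrow> z \<noteq> z' \<Longrightarrow> 3 \<le> k \<Longrightarrow> k \<le> card W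
       \<Longrightarrow> \<exists>q. is_path W E q \<and> length q = k \<and> hd q = z \<and> last q = z'"
    and xy: "x \<in> R" "y \<in> R" "x \<noteq> y"
  shows "3 \<le> l \<Longrightarrow> l \<le> card R \<Longrightarrow> \<exists>p. is_path R E p \<and> length p = l \<and> hd p = x \<and> last p = y"
proof (induction l rule: less_induct)
  case (less l)
  have common: "6 \<le> card ({u\<in>R. E a u} \<inter> {u\<in>R. E b u})" if "a \<in> R" "b \<in> R" for a b
  proof -
    have "card R + 6 \<le> 2 * card {u\<in>R. E a u}" "card R + 6 \<le> 2 * card {u\<in>R. E b u}" using deg that by auto
    then show ?thesis using common_nb[OF fin, of E a b] by linarith
  qed
  consider "l = 3" | "l = 4" | "5 \<le> l" using less.prems by linarith
  then show ?case
  proof cases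
    case 1
    have "0 < card ({u\<in>R. E x u} \<inter> {u\<in>R. E y u})" using common[OF xy(1,2)] by linarith
    then obtain w where w: "w \<in> R" "E x w" "E y w" by (metis (no_types, lifting) card_gt_0_iff disjoint_iff mem_Collect_eq)
    have "w \<noteq> x" "w \<noteq> y" using w irr by auto
    then have "is_path R E [x, w, y]" using w xy sym by (simp add: path_Cons2 path_single)
    then show ?thesis using 1 by (intro exI[of _ "[x,w,y]"]) simp
  next
    case 2
    have "card R + 6 \<le> 2 * card {u\<in>R. E x u}" using deg xy by blast
    then have "1 < card {u\<in>R. E x u}" using less.prems by linarith
    then obtain z where z: "z \<in> R" "E x z" "z \<noteq> y" using pick1[of "{u\<in>R. E x u}" y] by auto
    have "1 < card ({u\<in>R. E z u} \<inter> {u\<in>R. E y u})" using common[OF z(1) xy(2)] by linarith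
    then obtain w where w: "w \<in> R" "E z w" "E y w" "w \<noteq> x" using pick1[of "{u\<in>R. E z u} \<inter> {u\<in>R. E y u}" x] by auto
    have "z \<noteq> x" "w \<noteq> z" "w \<noteq> y" using z w irr by auto
    then have "is_path R E [x, z, w, y]" using w z xy sym by (simp add: path_Cons2 path_single)
    then show ?thesis using 2 by (intro exI[of _ "[x,z,w,y]"]) simp
  next
    case 3
    have "\<exists>p. is_path R E p \<and> length p = l - 1 \<and> hd p = x \<and> last p = y"
      by (rule less.IH) (use 3 less.prems in linarith)+
    then obtain P where P: "is_path R E P" "length P = l - 1" "hd P = x" "last P = y" by blast
    have "4 \<le> l - 1" "l - 1 < card R" using 3 less.prems by linarith+
    then obtain P' where "is_path R E P'" "length P' = Suc (l - 1)" "hd P' = hd P" "last P' = last P"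
      using core_step[OF sym irr fin deg IHW P(1) P(2)] by blast
    then show ?thesis using P 3 by (intro exI[of _ P']) simp
  qed
qed

lemma core:
  assumes sym: "\<forall>u v. E u v \<longrightarrow> E v u" and irr: "\<forall>v. \<not> E v v"
  shows "finite R \<Longrightarrow> (\<forall>v\<in>R. card R + 6 \<le> 2 * card {u\<in>R. E v u}) \<Longrightarrow> x \<in> R \<Longrightarrow> y \<in> R \<Longrightarrow> x \<noteq> y
    \<Longrightarrow> 3 \<le> l \<Longrightarrow> l \<le> card R \<Longrightarrow> \<exists>p. is_path R E p \<and> length p = l \<and> hd p = x \<and> last p = y"
proof (induction "card R" arbitrary: R x y l rule: less_induct)
  case less
  have IHW: "\<exists>q. is_path W E q \<and> length q = k \<and> hd q = z \<and> last q = z'"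
    if "W \<subset> R" "\<forall>v\<in>W. card W + 6 \<le> 2 * card {u\<in>W. E v u}" "z \<in> W" "z' \<in> W" "z \<noteq> z'" "3 \<le> k" "k \<le> card W"
    for W z z' k
  proof -
    have "finite W" using that(1) less.prems(1) finite_subset by blast
    moreover have "card W < card R" using that(1) less.prems(1) psubset_card_mono by blast
    ultimately show ?thesis using less.hyps that by blast
  qed
  show ?case using core_len[OF sym irr less.prems(1,2) IHW less.prems(3,4,5)] less.prems(6,7) by blast
qed

lemma sparse_path:
  assumes "\<forall>i j. i < j \<longrightarrow> j < length p \<longrightarrow> p!i \<in> S \<longrightarrow> p!j \<in> S \<longrightarrow> i + 4 \<le> j"
  shows "path_sparse4 p S"
  unfolding path_sparse4_def
proof (intro allI impI)
  fix i assume i: "i + 3 < length p"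
  let ?X = "(\<lambda>j. p ! (i + j)) ` {..<4} \<inter> S"
  have "\<forall>a\<in>?X. \<forall>b\<in>?X. a = b"
  proof (intro ballI)
    fix a b assume a: "a \<in> ?X" and b: "b \<in> ?X"
    then obtain j1 j2 where j: "j1 < 4" "j2 < 4" "a = p!(i+j1)" "b = p!(i+j2)" "a \<in> S" "b \<in> S" by auto
    show "a = b"
    proof (cases "j1 = j2")
      case True then show ?thesis using j by simp
    next
      case False
      then have "j1 < j2 \<or> j2 < j1" by linarith
      then show ?thesis
      proof
        assume "j1 < j2"
        moreover have "i + j2 < length p" using i j by linarith
        ultimately have "i + j1 + 4 \<le> i + j2" using assms[rule_format, of "i+j1" "i+j2"] j by simp
        then show ?thesis using j by simp
      next
        assume "j2 < j1"
        moreover have "i + j1 < length p" using i j by linarith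
        ultimately have "i + j2 + 4 \<le> i + j1" using assms[rule_format, of "i+j2" "i+j1"] j by simp
        then show ?thesis using j by simp
      qed
    qed
  qed
  moreover have "finite ?X" by simp
  ultimately show "card ?X \<le> 1" using card_le_Suc0_iff_eq[of ?X] by simp
qed

lemma mod_twice:
  fixes a L :: nat
  assumes "a < 2 * L"
  shows "a mod L = (if a < L then a else a - L)"
proof (cases "a < L")
  case True then show ?thesis by simp
next
  case False
  then have "a mod L = (a - L) mod L" by (simp add: le_mod_geq)
  moreover have "a - L < L" using assms False by linarith
  ultimately show ?thesis using False by simp
qed

lemma sparse_cycle:
  assumes L4: "4 \<le> length c"
    and h: "\<forall>i j. i < j \<longrightarrow> j < length c \<longrightarrow> c!i \<in> S \<longrightarrow> c!j \<in> S \<longrightarrow> i + 4 \<le> j \<and> j + 4 \<le> i + length c"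
  shows "cycle_sparse4 c S"
  unfolding cycle_sparse4_def
proof (intro allI impI)
  fix i assume i: "i < length c"
  let ?L = "length c"
  let ?X = "(\<lambda>j. c ! ((i + j) mod ?L)) ` {..<4} \<inter> S"
  have "\<forall>a\<in>?X. \<forall>b\<in>?X. a = b"
  proof (intro ballI)
    fix a b assume a: "a \<in> ?X" and b: "b \<in> ?X"
    then obtain j1 j2 where j: "j1 < 4" "j2 < 4" "a = c!((i+j1) mod ?L)" "b = c!((i+j2) mod ?L)" "a \<in> S" "b \<in> S" by auto
    define q1 where "q1 = (i + j1) mod ?L"
    define q2 where "q2 = (i + j2) mod ?L"
    have q1: "q1 = (if i + j1 < ?L then i + j1 else i + j1 - ?L)" unfolding q1_def
      using mod_twice[of "i+j1" ?L] i j L4 by linarith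
    have q2: "q2 = (if i + j2 < ?L then i + j2 else i + j2 - ?L)" unfolding q2_def
      using mod_twice[of "i+j2" ?L] i j L4 by linarith
    have q1L: "q1 < ?L" "q2 < ?L" using q1 q2 i j L4 by auto
    show "a = b"
    proof (rule ccontr)
      assume ne: "a \<noteq> b"
      then have "q1 \<noteq> q2" using j q1_def q2_def by auto
      then have "q1 < q2 \<or> q2 < q1" by linarith
      then show False
      proof
        assume "q1 < q2"
        then have "q1 + 4 \<le> q2 \<and> q2 + 4 \<le> q1 + ?L" using h q1L j q1_def q2_def by blast
        then show False using q1 q2 j i by (auto split: if_splits)
      next
        assume "q2 < q1"
        then have "q2 + 4 \<le> q1 \<and> q1 + 4 \<le> q2 + ?L" using h q1L j q1_def q2_def by blast
        then show False using q1 q2 j i by (auto split: if_splits)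
      qed
    qed
  qed
  moreover have "finite ?X" by simp
  ultimately show "card ?X \<le> 1" using card_le_Suc0_iff_eq[of ?X] by simp
qed

lemma chain:
  assumes sym: "\<forall>u v. E u v \<longrightarrow> E v u" and irr: "\<forall>v. \<not> E v v"
    and fin: "finite V" and BV: "B \<subseteq> V"
    and degB: "\<forall>v\<in>B. 3 * card B + 3 \<le> card {u\<in>V-B. E v u}"
    and comA: "\<forall>a\<in>V-B. \<forall>a'\<in>V-B. 9 * card B + 10 \<le> card ({u\<in>V-B. E a u} \<inter> {u\<in>V-B. E a' u})"
    and x: "x \<in> V - B" and y: "y \<in> V - B"
  shows "1 \<le> k \<Longrightarrow> k \<le> card B \<Longrightarrow> \<exists>L. is_path V E L \<and> length L = 4*k - 1 \<and> x \<notin> set L \<and> y \<notin> set L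
     \<and> (\<forall>j<length L. (L!j \<in> B) = (j mod 4 = 1)) \<and> card (set L \<inter> B) = k"
proof (induction k)
  case 0 then show ?case by simp
next
  case (Suc k)
  have finB: "finite B" using fin BV finite_subset by blast
  show ?case
  proof (cases "k = 0")
    case True
    have "B \<noteq> {}" using Suc.prems finB by auto
    then obtain v where v: "v \<in> B" by blast
    let ?S = "{u\<in>V-B. E v u}"
    have cS: "6 \<le> card ?S" using degB v Suc.prems by fastforce
    have "card {x,y} \<le> 2" by (simp add: card_insert_if)
    then obtain u where u: "u \<in> ?S" "u \<notin> {x,y}" using pick[of "{x,y}" ?S] cS by force
    have "card {x,y,u} \<le> 3" by (simp add: card_insert_if)
    then obtain w where w: "w \<in> ?S" "w \<notin> {x,y,u}" using pick[of "{x,y,u}" ?S] cS by force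
    have vV: "v \<in> V" using v BV by auto
    have "is_path V E [u, v, w]" using u w v vV sym by (auto simp: path_Cons2 path_single)
    moreover have "\<forall>j<length [u,v,w]. ([u,v,w]!j \<in> B) = (j mod 4 = 1)"
    proof (intro allI impI)
      fix j assume "j < length [u,v,w]"
      then have "j = 0 \<or> j = 1 \<or> j = 2" by auto
      then show "([u,v,w]!j \<in> B) = (j mod 4 = 1)" using u w v by auto
    qed
    moreover have "set [u,v,w] \<inter> B = {v}" using u w v by auto
    ultimately show ?thesis using True u w v x y by (intro exI[of _ "[u,v,w]"]) auto
  next
    case False
    then obtain L where L: "is_path V E L" "length L = 4*k - 1" "x \<notin> set L" "y \<notin> set L"
      "\<forall>j<length L. (L!j \<in> B) = (j mod 4 = 1)" "card (set L \<inter> B) = k"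
      using Suc.IH Suc.prems by auto
    obtain k' where k': "k = Suc k'" using False by (cases k) auto
    have lenL: "length L = 4 * k' + 3" using L(2) k' by simp
    have dL: "distinct L" and sL: "set L \<subseteq> V" using L(1) by (auto simp: is_path_def)
    have cL: "card (set L) = 4*k - 1" using dL L(2) distinct_card by metis
    have "set L = (set L \<inter> B) \<union> (set L \<inter> (V-B))" using sL by auto
    moreover have "(set L \<inter> B) \<inter> (set L \<inter> (V-B)) = {}" by auto
    ultimately have "card (set L) = card (set L \<inter> B) + card (set L \<inter> (V-B))"
      by (metis List.finite_set card_Un_disjoint finite_Int)
    then have cLA: "card (set L \<inter> (V-B)) = 3*k - 1" using cL L(6) by simp
    have "card (set L \<inter> B) < card B" using L(6) Suc.prems by simp
    then obtain v where v: "v \<in> B" "v \<notin> set L \<inter> B" using pick[of "set L \<inter> B" B] by auto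
    have vL: "v \<notin> set L" using v by auto
    have vV: "v \<in> V" using v BV by auto
    define F1 where "F1 = (set L \<inter> (V-B)) \<union> {x,y}"
    have finF1: "finite F1" unfolding F1_def by simp
    have cF1: "card F1 \<le> 3*k + 1"
    proof -
      have "card F1 \<le> card (set L \<inter> (V-B)) + card {x,y}" unfolding F1_def using card_Un_le by blast
      moreover have "card {x,y} \<le> 2" by (simp add: card_insert_if)
      ultimately show ?thesis using cLA False by linarith
    qed
    let ?S = "{u\<in>V-B. E v u}"
    have cS: "3 * card B + 3 \<le> card ?S" using degB v by blast
    obtain u where u: "u \<in> ?S" "u \<notin> F1" using pick[OF finF1, of ?S] cS cF1 Suc.prems by force
    have "card (insert u F1) \<le> 3*k + 2" using cF1 finF1 by (simp add: card_insert_if)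
    then obtain w where w: "w \<in> ?S" "w \<notin> insert u F1" using pick[of "insert u F1" ?S] finF1 cS Suc.prems by force
    have lastL: "last L \<in> V - B"
    proof -
      have "L \<noteq> []" using L(1) by (simp add: is_path_def)
      then have "last L = L!(length L - 1)" by (simp add: last_conv_nth)
      moreover have "length L - 1 < length L" using \<open>L \<noteq> []\<close> by simp
      moreover have "(length L - 1) mod 4 = 2"
      proof -
        have "length L - 1 = 2 + 4 * k'" using lenL by simp
        then show ?thesis by presburger
      qed
      moreover have "\<not> (2::nat) = 1" by simp
      ultimately have "last L \<notin> B" using L(5) by auto
      moreover have "last L \<in> V" using sL \<open>L \<noteq> []\<close> by auto
      ultimately show ?thesis by simp
    qed
    have uA: "u \<in> V - B" using u by auto
    let ?C = "{u'\<in>V-B. E (last L) u'} \<inter> {u'\<in>V-B. E u u'}"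
    have cC: "9 * card B + 10 \<le> card ?C" using comA lastL uA by blast
    have "card (insert w F1) \<le> 3*k + 2" using cF1 finF1 by (simp add: card_insert_if)
    then obtain c where c: "c \<in> ?C" "c \<notin> insert w F1" using pick[of "insert w F1" ?C] finF1 cC Suc.prems by force
    have cne: "c \<noteq> u" "c \<noteq> v" "c \<noteq> w" "u \<noteq> v" "u \<noteq> w" "v \<noteq> w" using c u w v irr by auto
    have nL: "c \<notin> set L" "u \<notin> set L" "w \<notin> set L" using c u w unfolding F1_def by auto
    have Q: "is_path V E [c, u, v, w]" using c u w vV cne sym by (auto simp: path_Cons2 path_single)
    have L': "is_path V E (L @ [c,u,v,w])"
      using path_append[OF L(1) Q] nL vL c by auto
    have len: "length (L @ [c,u,v,w]) = 4 * Suc k - 1" using L(2) False by simp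
    have xy: "x \<notin> set (L @ [c,u,v,w])" "y \<notin> set (L @ [c,u,v,w])"
      using L(3,4) c u w v x y unfolding F1_def by auto
    have pos: "\<forall>j<length (L @ [c,u,v,w]). ((L @ [c,u,v,w])!j \<in> B) = (j mod 4 = 1)"
    proof (intro allI impI)
      fix j assume j: "j < length (L @ [c,u,v,w])"
      show "((L @ [c,u,v,w])!j \<in> B) = (j mod 4 = 1)"
      proof (cases "j < length L")
        case True then show ?thesis using L(5) by (simp add: nth_append)
      next
        case False2: False
        define r where "r = j - length L"
        have r: "j = length L + r" "r < 4" using j False2 unfolding r_def by auto
        have "(L @ [c,u,v,w])!j = [c,u,v,w]!r" using r by (simp add: nth_append)
        moreover have "r = 0 \<or> r = 1 \<or> r = 2 \<or> r = 3" using r by auto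
        moreover have "j mod 4 = (r + 3) mod 4"
        proof -
          have "j = (r + 3) + 4 * k'" using r lenL by simp
          then show ?thesis by simp
        qed
        ultimately show ?thesis using c u w v by auto
      qed
    qed
    have "set (L @ [c,u,v,w]) \<inter> B = insert v (set L \<inter> B)" using c u w v by auto
    then have "card (set (L @ [c,u,v,w]) \<inter> B) = Suc k" using L(6) vL by simp
    then show ?thesis using L' len xy pos by (intro exI[of _ "L @ [c,u,v,w]"]) simp
  qed
qed

lemma mod4_aux: "(d::nat) mod 4 = 0 \<Longrightarrow> d < 4*k+2 \<Longrightarrow> d \<le> 4*k"
  by presburger

lemma mod4_aux2: "(q::nat) \<le> i \<Longrightarrow> (i - q) mod 4 = 0 \<Longrightarrow> (j - q) mod 4 = 0 \<Longrightarrow> i < j \<Longrightarrow> i + 4 \<le> j"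
  by presburger

lemma mod4_aux3: "Suc d mod 4 = 1 \<Longrightarrow> (d::nat) mod 4 = 0"
  by (simp add: mod_Suc split: if_splits)

lemma gadget:
  assumes sym: "\<forall>u v. E u v \<longrightarrow> E v u" and irr: "\<forall>v. \<not> E v v"
    and fin: "finite V" and BV: "B \<subseteq> V"
    and degB: "\<forall>v\<in>B. 3 * card B + 3 \<le> card {u\<in>V-B. E v u}"
    and degA: "\<forall>v\<in>V-B. card V + 8 * card B + 10 \<le> 2 * card {u\<in>V-B. E v u}"
    and comA: "\<forall>a\<in>V-B. \<forall>a'\<in>V-B. 9 * card B + 10 \<le> card ({u\<in>V-B. E a u} \<inter> {u\<in>V-B. E a' u})"
    and hb: "100 * card B \<le> card V"
    and x: "x \<in> V - B" and y: "y \<in> V - B" and xy: "x \<noteq> y"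
    and k: "1 \<le> k" "k \<le> card B"
  shows "\<exists>p. is_path V E p \<and> length p = card (V - B) + k \<and> hd p = x \<and> last p = y
     \<and> (\<forall>j<length p. p!j \<in> B \<longrightarrow> 4 \<le> j \<and> j + 5 \<le> length p)
     \<and> (\<forall>i j. i < j \<longrightarrow> j < length p \<longrightarrow> p!i \<in> B \<longrightarrow> p!j \<in> B \<longrightarrow> i + 4 \<le> j)"
proof -
  define A where "A = V - B"
  have finB: "finite B" using fin BV finite_subset by blast
  have finA: "finite A" using fin A_def by simp
  have cA: "card A + card B = card V" using A_def BV finB card_Diff_subset[OF finB BV]
    by (metis card_mono fin le_add_diff_inverse2)
  obtain L where L: "is_path V E L" "length L = 4*k - 1" "x \<notin> set L" "y \<notin> set L"
     "\<forall>j<length L. (L!j \<in> B) = (j mod 4 = 1)" "card (set L \<inter> B) = k"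
    using chain[OF sym irr fin BV degB comA x y k] by blast
  obtain k' where k': "k = Suc k'" using k by (cases k) auto
  have lenL: "length L = 4 * k' + 3" using L(2) k' by simp
  have dL: "distinct L" and sL: "set L \<subseteq> V" and Lne: "L \<noteq> []" using L(1) by (auto simp: is_path_def)
  have cL: "card (set L) = 4 * k' + 3" using dL lenL distinct_card by metis
  have "set L = (set L \<inter> B) \<union> (set L \<inter> A)" using sL A_def by auto
  moreover have "(set L \<inter> B) \<inter> (set L \<inter> A) = {}" using A_def by auto
  ultimately have "card (set L) = card (set L \<inter> B) + card (set L \<inter> A)"
    by (metis List.finite_set card_Un_disjoint finite_Int)
  then have cLA: "card (set L \<inter> A) = 3 * k' + 2" using cL L(6) k' by simp
  have hdL: "hd L \<in> A"
  proof -
    have "hd L = L!0" using Lne by (simp add: hd_conv_nth)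
    moreover have "\<not> L!0 \<in> B" using L(5) lenL by auto
    moreover have "L!0 \<in> V" using sL lenL by auto
    ultimately show ?thesis using A_def by simp
  qed
  have lastL: "last L \<in> A"
  proof -
    have "last L = L!(length L - 1)" using Lne by (simp add: last_conv_nth)
    moreover have "(length L - 1) mod 4 = 2"
    proof -
      have "length L - 1 = 2 + 4 * k'" using lenL by simp
      then show ?thesis by presburger
    qed
    ultimately have "last L \<notin> B" using L(5) lenL by (metis diff_less zero_less_numeral Suc_leI le_add2 numeral_2_eq_2 numeral_3_eq_3 nat.distinct(1) one_eq_numeral_iff semiring_norm(85) zero_less_Suc less_numeral_extra(1) add_gr_0)
    moreover have "last L \<in> V" using sL Lne by auto
    ultimately show ?thesis using A_def by simp
  qed
  have degA': "card V + 8 * card B + 10 \<le> 2 * card {u\<in>A. E v u}" if "v \<in> A" for v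
    using degA that A_def by blast
  define F3 where "F3 = (set L \<inter> A) \<union> {x, y}"
  have finF3: "finite F3" unfolding F3_def by simp
  have cF3: "card F3 \<le> 3 * k' + 4"
  proof -
    have "card F3 \<le> card (set L \<inter> A) + card {x,y}" unfolding F3_def using card_Un_le by blast
    moreover have "card {x,y} \<le> 2" by (simp add: card_insert_if)
    ultimately show ?thesis using cLA by linarith
  qed
  have "card F3 < card {u\<in>A. E (last L) u}" using degA'[OF lastL] cF3 k k' by linarith
  then obtain e where e: "e \<in> A" "E (last L) e" "e \<notin> F3" using pick[OF finF3] by auto
  define F4 where "F4 = (set L \<inter> A) \<union> {x}"
  have finF4: "finite F4" unfolding F4_def by simp
  have cF4: "card F4 \<le> 3 * k' + 3"
  proof -
    have "card F4 \<le> card (set L \<inter> A) + card {x}" unfolding F4_def using card_Un_le by blast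
    then show ?thesis using cLA by simp
  qed
  have yA: "y \<in> A" using y A_def by simp
  have xA: "x \<in> A" using x A_def by simp
  have "9 * card B + 10 \<le> card ({u\<in>A. E e u} \<inter> {u\<in>A. E y u})"
    using comA e(1) yA unfolding A_def by blast
  then have "card F4 < card ({u\<in>A. E e u} \<inter> {u\<in>A. E y u})"
    using cF4 k k' by linarith
  then obtain f where f: "f \<in> A" "E e f" "E y f" "f \<notin> F4" using pick[OF finF4] by auto
  have ef: "e \<noteq> f" "f \<noteq> y" "e \<noteq> y" "e \<noteq> x" "f \<noteq> x" "e \<notin> set L" "f \<notin> set L"
    using e f irr unfolding F3_def F4_def by auto
  have Lsplit: "L = hd L # tl L" using Lne by simp
  have hdtl: "hd L \<notin> set (tl L)" using dL Lsplit by (metis distinct.simps(2))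
  have setL: "set L = insert (hd L) (set (tl L))" using Lsplit by (metis list.simps(15))
  have "set L \<inter> A = insert (hd L) (set (tl L) \<inter> A)" using setL hdL by auto
  then have ctlA: "card (set (tl L) \<inter> A) = 3 * k' + 1" using cLA hdtl by simp
  define D where "D = (set (tl L) \<inter> A) \<union> {e, f, y}"
  define R0 where "R0 = A - D"
  have DA: "D \<subseteq> A" unfolding D_def using e f yA by auto
  have "{e,f,y} \<inter> (set (tl L) \<inter> A) = {}" using ef L(4) setL by auto
  moreover have "card {e,f,y} = 3" using ef by simp
  ultimately have cD: "card D = 3 * k' + 4" unfolding D_def using ctlA
    card_Un_disjoint[of "set (tl L) \<inter> A" "{e,f,y}"] by (simp add: Int_commute)
  have cR0: "card R0 + card D = card A" unfolding R0_def using DA finA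
    by (metis card_Diff_subset card_mono finite_subset le_add_diff_inverse2)
  have finR0: "finite R0" unfolding R0_def using finA by simp
  have R0A: "R0 \<subseteq> A" unfolding R0_def by auto
  have degR0: "\<forall>v\<in>R0. card R0 + 6 \<le> 2 * card {u\<in>R0. E v u}"
  proof
    fix v assume v: "v \<in> R0"
    have "{u\<in>A. E v u} \<subseteq> {u\<in>R0. E v u} \<union> D" unfolding R0_def by auto
    moreover have "finite ({u\<in>R0. E v u} \<union> D)" using finR0 DA finA finite_subset by auto
    ultimately have "card {u\<in>A. E v u} \<le> card ({u\<in>R0. E v u} \<union> D)" by (simp add: card_mono)
    then have "card {u\<in>A. E v u} \<le> card {u\<in>R0. E v u} + card D"
      using card_Un_le[of "{u\<in>R0. E v u}" D] by linarith
    moreover have "card V + 8 * card B + 10 \<le> 2 * card {u\<in>A. E v u}" using degA' v R0A by auto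
    ultimately show "card R0 + 6 \<le> 2 * card {u\<in>R0. E v u}" using cR0 cA cD k k' by linarith
  qed
  have xR0: "x \<in> R0" using xA ef L(3) setL xy unfolding R0_def D_def by auto
  have hR0: "hd L \<in> R0" using hdL hdtl ef L(4) setL unfolding R0_def D_def by auto
  have xh: "x \<noteq> hd L" using L(3) Lne by auto
  have R04: "4 \<le> card R0" using cR0 cA cD hb k k' by linarith
  obtain Q where Q: "is_path R0 E Q" "length Q = card R0" "hd Q = x" "last Q = hd L"
    using core[OF sym irr finR0 degR0 xR0 hR0 xh, of "card R0"] R04 by auto
  have QV: "is_path V E Q" using Q(1) R0A A_def path_mono by blast
  have tlp: "is_path V E (tl L)" using path_drop[OF L(1), of 1] lenL by (simp add: drop_Suc)
  have efy: "is_path V E [e, f, y]" using e f yA ef sym A_def by (auto simp: path_Cons2 path_single)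
  have tlne: "tl L \<noteq> []" using lenL by (cases L) auto
  have T: "is_path V E (tl L @ [e, f, y])"
    using path_append[OF tlp efy] ef L(4) setL last_tl[of L] tlne e(2) by auto
  have disj: "set Q \<inter> set (tl L @ [e, f, y]) = {}"
  proof -
    have "set Q \<subseteq> R0" using Q(1) by (simp add: is_path_def)
    moreover have "R0 \<inter> set (tl L @ [e, f, y]) = {}" unfolding R0_def D_def using R0A by auto
    ultimately show ?thesis by auto
  qed
  have "E (L!0) (L!1)" using L(1) lenL unfolding is_path_def by auto
  moreover have "hd (tl L @ [e, f, y]) = L!1" using tlne lenL by (simp add: hd_conv_nth nth_tl nth_append)
  moreover have "last Q = L!0" using Q(4) Lne by (simp add: hd_conv_nth)
  ultimately have e0: "E (last Q) (hd (tl L @ [e, f, y]))" by simp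
  define p where "p = Q @ (tl L @ [e, f, y])"
  have pP: "is_path V E p" unfolding p_def using path_append[OF QV T disj e0] .
  have lp: "length p = card R0 + 4 * k' + 5" unfolding p_def using Q(2) lenL by simp
  have lp2: "length p = card A + k" using lp cR0 cD k' by simp
  have Qne: "Q \<noteq> []" using Q(1) by (simp add: is_path_def)
  have hp: "hd p = x" unfolding p_def using Q(3) Qne by simp
  have lastp: "last p = y" unfolding p_def by simp
  have posB: "length Q \<le> j \<and> (j - length Q) mod 4 = 0 \<and> j < length Q + 4 * k' + 2"
    if j: "j < length p" "p!j \<in> B" for j
  proof -
    have nQ: "\<not> j < length Q"
    proof
      assume "j < length Q"
      then have "p!j \<in> set Q" unfolding p_def by (simp add: nth_append)
      then show False using that(2) Q(1) R0A A_def unfolding is_path_def by auto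
    qed
    have jb: "j < length Q + 4 * k' + 2"
    proof (rule ccontr)
      assume "\<not> ?thesis"
      then have ge: "length Q + length (tl L) \<le> j" using lenL by simp
      have lt: "j - length Q - length (tl L) < 3" using j(1) lp lenL unfolding p_def by simp
      have "p!j = (tl L @ [e, f, y]) ! (j - length Q)" using ge unfolding p_def by (simp add: nth_append)
      also have "\<dots> = [e, f, y] ! (j - length Q - length (tl L))"
      proof -
        have "\<not> (j - length Q < length (tl L))" using ge by linarith
        then show ?thesis by (simp add: nth_append del: length_tl)
      qed
      finally have "p!j = [e, f, y] ! (j - length Q - length (tl L))" .
      then have "p!j \<in> set [e, f, y]" using lt by (metis nth_mem length_Cons list.size(3) numeral_3_eq_3)
      then show False using j(2) e f yA A_def by auto
    qed
    have "(j - length Q) mod 4 = 0"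
    proof -
      have jr: "j - length Q < length (tl L)" using nQ jb lenL by simp
      have "p!j = (tl L @ [e, f, y]) ! (j - length Q)" using nQ unfolding p_def by (simp add: nth_append)
      also have "\<dots> = (tl L) ! (j - length Q)" using jr by (simp add: nth_append)
      also have "\<dots> = L ! Suc (j - length Q)" using jr by (simp add: nth_tl)
      finally have "L ! Suc (j - length Q) \<in> B" using j(2) by simp
      then have "Suc (j - length Q) mod 4 = 1" using L(5) jr by auto
      then show ?thesis by (rule mod4_aux3)
    qed
    then show ?thesis using nQ jb by simp
  qed
  have c1: "\<forall>j<length p. p!j \<in> B \<longrightarrow> 4 \<le> j \<and> j + 5 \<le> length p"
  proof (intro allI impI)
    fix j assume "j < length p" "p!j \<in> B"
    then have h: "length Q \<le> j" "(j - length Q) mod 4 = 0" "j < length Q + 4 * k' + 2" using posB by blast+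
    have "j - length Q \<le> 4 * k'" using mod4_aux[OF h(2), of k'] h(1,3) by linarith
    then show "4 \<le> j \<and> j + 5 \<le> length p" using h(1) lp Q(2) R04 by linarith
  qed
  have c2: "\<forall>i j. i < j \<longrightarrow> j < length p \<longrightarrow> p!i \<in> B \<longrightarrow> p!j \<in> B \<longrightarrow> i + 4 \<le> j"
  proof (intro allI impI)
    fix i j assume ij: "i < j" "j < length p" "p!i \<in> B" "p!j \<in> B"
    then have h1: "length Q \<le> i" "(i - length Q) mod 4 = 0" using posB by auto
    have h2: "length Q \<le> j" "(j - length Q) mod 4 = 0" using posB ij by auto
    show "i + 4 \<le> j" using mod4_aux2[OF h1(1) h1(2) h2(2) ij(1)] .
  qed
  show ?thesis using pP lp2 hp lastp c1 c2 A_def by blast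
qed

lemma cycle_of_path:
  assumes "is_path V E p" "3 \<le> length p" "E (last p) (hd p)"
  shows "is_cycle V E p"
  unfolding is_cycle_def
proof (intro conjI allI impI)
  show "3 \<le> length p" using assms(2) .
  show "distinct p" "set p \<subseteq> V" using assms(1) by (auto simp: is_path_def)
  fix i assume i: "i < length p"
  show "E (p ! i) (p ! ((i + 1) mod length p))"
  proof (cases "i + 1 < length p")
    case True
    then show ?thesis using assms(1) by (simp add: is_path_def)
  next
    case False
    then have i1: "i + 1 = length p" using i by linarith
    then have "i = length p - 1" "(i + 1) mod length p = 0" by auto
    moreover have pne: "p \<noteq> []" using assms(2) by auto
    moreover have "p ! (length p - 1) = last p" "p ! 0 = hd p" using pne
      by (simp_all add: last_conv_nth hd_conv_nth)
    ultimately show ?thesis using assms(3) by simp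
  qed
qed

lemma cycle_sparse_noB:
  assumes "set c \<inter> S = {}" "0 < length c"
  shows "cycle_sparse4 c S"
  unfolding cycle_sparse4_def
proof (intro allI impI)
  fix i assume "i < length c"
  have "(\<lambda>j. c ! ((i + j) mod length c)) ` {..<4} \<subseteq> set c" using assms(2) by auto
  then have "(\<lambda>j. c ! ((i + j) mod length c)) ` {..<4} \<inter> S = {}" using assms(1) by auto
  then show "card ((\<lambda>j. c ! ((i + j) mod length c)) ` {..<4} \<inter> S) \<le> 1" by simp
qed

theorem lemma7p2:
  fixes V :: "'a set" and E :: "'a \<Rightarrow> 'a \<Rightarrow> bool" and B :: "'a set"
  assumes "simple_graph V E"
    and "card V \<ge> 10"
    and "B \<subseteq> V"
    and "real (card B) \<le> real (card V) / 100"
    and "\<forall>v\<in>B. card (neighbours V E v) \<ge> 4 * card B + 2"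
    and "\<forall>v\<in>V - B. real (card (neighbours V E v)) \<ge> real (card V) / 2 + 5 * real (card B) + 5"
  shows "(\<forall>l. 3 \<le> l \<and> l \<le> card V \<longrightarrow>
            (\<exists>c. is_cycle V E c \<and> length c = l \<and> cycle_sparse4 c B))
       \<and> (\<forall>x\<in>V - B. \<forall>y\<in>V - B. x \<noteq> y \<longrightarrow>
            (\<forall>l. 5 \<le> l \<and> l \<le> card V \<longrightarrow>
              (\<exists>p. is_path V E p \<and> length p = l \<and> hd p = x \<and> last p = y
                   \<and> path_sparse4 p (B \<union> {x, y}))))"
proof -
  have fin: "finite V" and Ein: "\<forall>u v. E u v \<longrightarrow> u \<in> V \<and> v \<in> V"
    and sym: "\<forall>u v. E u v \<longrightarrow> E v u" and irr: "\<forall>v. \<not> E v v"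
    using assms(1) unfolding simple_graph_def by auto
  have BV: "B \<subseteq> V" using assms(3) .
  define A where "A = V - B"
  have finB: "finite B" using fin BV finite_subset by blast
  have finA: "finite A" using fin A_def by simp
  have cA: "card A + card B = card V" unfolding A_def using card_Diff_subset[OF finB BV] card_mono[OF fin BV] by simp
  have hb: "100 * card B \<le> card V"
  proof -
    have "real (100 * card B) \<le> real (card V)" using assms(4) by simp
    then show ?thesis by linarith
  qed
  have nbV: "neighbours V E v = {u\<in>V. E v u}" for v by (simp add: neighbours_def)
  have degV: "card V + 10 * card B + 10 \<le> 2 * card {u\<in>V. E v u}" if "v \<in> A" for v
  proof -
    have "real (card V) / 2 + 5 * real (card B) + 5 \<le> real (card {u\<in>V. E v u})"
      using assms(6) that A_def nbV by auto
    then have "real (card V + 10 * card B + 10) \<le> real (2 * card {u\<in>V. E v u})" by simp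
    then show ?thesis by linarith
  qed
  have degA: "card V + 8 * card B + 10 \<le> 2 * card {u\<in>A. E v u}" if "v \<in> A" for v
  proof -
    have sub: "{u\<in>V. E v u} \<subseteq> {u\<in>A. E v u} \<union> B" unfolding A_def by blast
    have "finite ({u\<in>A. E v u} \<union> B)" using finA finB by simp
    then have "card {u\<in>V. E v u} \<le> card ({u\<in>A. E v u} \<union> B)" by (rule card_mono) (rule sub)
    then have "card {u\<in>V. E v u} \<le> card {u\<in>A. E v u} + card B" using card_Un_le[of "{u\<in>A. E v u}" B] by linarith
    then show ?thesis using degV[OF that] by linarith
  qed
  have degB: "3 * card B + 3 \<le> card {u\<in>A. E v u}" if "v \<in> B" for v
  proof -
    have sub: "{u\<in>V. E v u} \<subseteq> {u\<in>A. E v u} \<union> (B - {v})" unfolding A_def using irr by blast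
    have "finite ({u\<in>A. E v u} \<union> (B - {v}))" using finA finB by simp
    then have "card {u\<in>V. E v u} \<le> card ({u\<in>A. E v u} \<union> (B - {v}))" by (rule card_mono) (rule sub)
    then have "card {u\<in>V. E v u} \<le> card {u\<in>A. E v u} + card (B - {v})" using card_Un_le[of "{u\<in>A. E v u}" "B - {v}"] by linarith
    moreover have "card (B - {v}) = card B - 1" using that finB by simp
    moreover have "1 \<le> card B" using that finB by (metis One_nat_def Suc_leI card_gt_0_iff empty_iff)
    moreover have "4 * card B + 2 \<le> card {u\<in>V. E v u}" using assms(5) that nbV by auto
    ultimately show ?thesis by linarith
  qed
  have comA: "9 * card B + 10 \<le> card ({u\<in>A. E a u} \<inter> {u\<in>A. E a' u})" if "a \<in> A" "a' \<in> A" for a a'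
  proof -
    have "card {u\<in>A. E a u} + card {u\<in>A. E a' u} \<le> card ({u\<in>A. E a u} \<inter> {u\<in>A. E a' u}) + card A"
      by (rule common_nb[OF finA])
    then show ?thesis using degA[OF that(1)] degA[OF that(2)] cA by linarith
  qed
  have degA6: "\<forall>v\<in>A. card A + 6 \<le> 2 * card {u\<in>A. E v u}"
  proof
    fix v assume "v \<in> A"
    then show "card A + 6 \<le> 2 * card {u\<in>A. E v u}" using degA[of v] cA by linarith
  qed
  have PL: "\<exists>p. is_path V E p \<and> length p = l \<and> hd p = x \<and> last p = y
     \<and> (\<forall>j<length p. p!j \<in> B \<longrightarrow> 4 \<le> j \<and> j + 5 \<le> length p)
     \<and> (\<forall>i j. i < j \<longrightarrow> j < length p \<longrightarrow> p!i \<in> B \<longrightarrow> p!j \<in> B \<longrightarrow> i + 4 \<le> j)"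
    if xy: "x \<in> A" "y \<in> A" "x \<noteq> y" and l: "5 \<le> l" "l \<le> card V" for x y l
  proof (cases "l \<le> card A")
    case True
    obtain p where p: "is_path A E p" "length p = l" "hd p = x" "last p = y"
      using core[OF sym irr finA degA6 xy, of l] True l by auto
    have pV: "is_path V E p" using p(1) path_mono A_def by blast
    have "p!j \<notin> B" if "j < length p" for j
      using p(1) that A_def unfolding is_path_def by (meson DiffD2 nth_mem subsetD)
    then show ?thesis using pV p by blast
  next
    case False
    have "1 \<le> l - card A" "l - card A \<le> card B" using False l cA by linarith+
    then obtain p where p: "is_path V E p" "length p = card (V - B) + (l - card A)" "hd p = x" "last p = y"
     "\<forall>j<length p. p!j \<in> B \<longrightarrow> 4 \<le> j \<and> j + 5 \<le> length p"
     "\<forall>i j. i < j \<longrightarrow> j < length p \<longrightarrow> p!i \<in> B \<longrightarrow> p!j \<in> B \<longrightarrow> i + 4 \<le> j"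
      using gadget[OF sym irr fin BV, of x y "l - card A"] degB degA comA hb xy A_def by auto
    have "length p = l" using p(2) False A_def by simp
    then show ?thesis using p by blast
  qed
  have part1: "\<forall>l. 3 \<le> l \<and> l \<le> card V \<longrightarrow> (\<exists>c. is_cycle V E c \<and> length c = l \<and> cycle_sparse4 c B)"
  proof (intro allI impI)
    fix l assume l: "3 \<le> l \<and> l \<le> card V"
    have "0 < card A" using cA hb assms(2) by linarith
    then have "A \<noteq> {}" by auto
    then obtain x where x: "x \<in> A" by blast
    have "0 < card {u\<in>A. E x u}" using degA[OF x] by linarith
    then have "{u\<in>A. E x u} \<noteq> {}" by (metis card.empty less_irrefl)
    then obtain y where y: "y \<in> A" "E x y" by blast
    have xy: "x \<noteq> y" using y irr by auto
    have yx: "E y x" using sym y(2) by blast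
    show "\<exists>c. is_cycle V E c \<and> length c = l \<and> cycle_sparse4 c B"
    proof (cases "l \<le> card A")
      case True
      obtain p where p: "is_path A E p" "length p = l" "hd p = x" "last p = y"
        using core[OF sym irr finA degA6 x y(1) xy, of l] True l by auto
      have pV: "is_path V E p" using p(1) path_mono A_def by blast
      have cyc: "is_cycle V E p" using cycle_of_path[OF pV] p l yx by simp
      have "set p \<inter> B = {}" using p(1) A_def unfolding is_path_def by auto
      moreover have "0 < length p" using p(2) l by simp
      ultimately have "cycle_sparse4 p B" by (rule cycle_sparse_noB)
      then show ?thesis using cyc p by blast
    next
      case False
      have l5: "5 \<le> l" using False cA hb l assms(2) by linarith
      obtain p where p: "is_path V E p" "length p = l" "hd p = x" "last p = y"
       "\<forall>j<length p. p!j \<in> B \<longrightarrow> 4 \<le> j \<and> j + 5 \<le> length p"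
       "\<forall>i j. i < j \<longrightarrow> j < length p \<longrightarrow> p!i \<in> B \<longrightarrow> p!j \<in> B \<longrightarrow> i + 4 \<le> j"
        using PL[OF x y(1) xy l5] l by blast
      have cyc: "is_cycle V E p" using cycle_of_path[OF p(1)] p l yx by simp
      have "cycle_sparse4 p B"
      proof (rule sparse_cycle)
        show "4 \<le> length p" using p l5 by simp
        show "\<forall>i j. i < j \<longrightarrow> j < length p \<longrightarrow> p!i \<in> B \<longrightarrow> p!j \<in> B \<longrightarrow> i + 4 \<le> j \<and> j + 4 \<le> i + length p"
        proof (intro allI impI)
          fix i j assume h: "i < j" "j < length p" "p!i \<in> B" "p!j \<in> B"
          have "i + 4 \<le> j" using p(6) h by blast
          moreover have "j + 5 \<le> length p" using p(5) h by blast
          ultimately show "i + 4 \<le> j \<and> j + 4 \<le> i + length p" by linarith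
        qed
      qed
      then show ?thesis using cyc p by blast
    qed
  qed
  have part2: "\<forall>x\<in>V - B. \<forall>y\<in>V - B. x \<noteq> y \<longrightarrow>
            (\<forall>l. 5 \<le> l \<and> l \<le> card V \<longrightarrow>
              (\<exists>p. is_path V E p \<and> length p = l \<and> hd p = x \<and> last p = y
                   \<and> path_sparse4 p (B \<union> {x, y})))"
  proof (intro ballI impI allI)
    fix x y l assume x: "x \<in> V - B" and y: "y \<in> V - B" and xy: "x \<noteq> y" and l: "5 \<le> l \<and> l \<le> card V"
    obtain p where p: "is_path V E p" "length p = l" "hd p = x" "last p = y"
       "\<forall>j<length p. p!j \<in> B \<longrightarrow> 4 \<le> j \<and> j + 5 \<le> length p"
       "\<forall>i j. i < j \<longrightarrow> j < length p \<longrightarrow> p!i \<in> B \<longrightarrow> p!j \<in> B \<longrightarrow> i + 4 \<le> j"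
      using PL[of x y l] x y xy l A_def by blast
    have dp: "distinct p" and pne: "p \<noteq> []" using p(1) by (auto simp: is_path_def)
    have px: "i = 0" if "i < length p" "p!i = x" for i
    proof -
      have "p!0 = x" using p(3) pne by (simp add: hd_conv_nth)
      then show ?thesis using that dp pne nth_eq_iff_index_eq by fastforce
    qed
    have py: "i = length p - 1" if "i < length p" "p!i = y" for i
    proof -
      have "p!(length p - 1) = y" using p(4) pne by (simp add: last_conv_nth)
      then show ?thesis using that dp pne nth_eq_iff_index_eq by fastforce
    qed
    have xB: "x \<notin> B" "y \<notin> B" using x y by auto
    have "path_sparse4 p (B \<union> {x, y})"
    proof (rule sparse_path)
      show "\<forall>i j. i < j \<longrightarrow> j < length p \<longrightarrow> p!i \<in> B \<union> {x, y} \<longrightarrow> p!j \<in> B \<union> {x, y} \<longrightarrow> i + 4 \<le> j"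
      proof (intro allI impI)
        fix i j assume h: "i < j" "j < length p" "p!i \<in> B \<union> {x, y}" "p!j \<in> B \<union> {x, y}"
        have il: "i < length p" using h by linarith
        consider "p!i \<in> B" | "p!i = x" | "p!i = y" using h(3) by blast
        then show "i + 4 \<le> j"
        proof cases
          case 1
          consider "p!j \<in> B" | "p!j = x" | "p!j = y" using h(4) by blast
          then show ?thesis
          proof cases
            case 1 then show ?thesis using p(6) h \<open>p!i \<in> B\<close> by blast
          next
            case 2 then show ?thesis using px[OF h(2)] h by simp
          next
            case 3
            have "j = length p - 1" using py[OF h(2) 3] .
            moreover have "i + 5 \<le> length p" using p(5) il \<open>p!i \<in> B\<close> by blast
            ultimately show ?thesis by linarith
          qed
        next
          case 2
          then have i0: "i = 0" using px[OF il] by simp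
          consider "p!j \<in> B" | "p!j = x" | "p!j = y" using h(4) by blast
          then show ?thesis
          proof cases
            case 1 then show ?thesis using p(5) h i0 by fastforce
          next
            case 2 then show ?thesis using px[OF h(2)] h by simp
          next
            case 3 then show ?thesis using py[OF h(2) 3] i0 p(2) l by linarith
          qed
        next
          case 3
          then have "i = length p - 1" using py[OF il] by simp
          then show ?thesis using h by linarith
        qed
      qed
    qed
    then show "\<exists>p. is_path V E p \<and> length p = l \<and> hd p = x \<and> last p = y \<and> path_sparse4 p (B \<union> {x, y})"
      using p by blast
  qed
  show ?thesis using part1 part2 by blast
qed

end
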